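(* Let $(x,y,z)\in E_k$ with $x,y,z$ all non-zero. Write $x=2\cos\theta_x$, $y=2\cos\theta_y$, $z=2\cos\theta_z$, $xz-y=2\cos\theta_{xz-y}$ with $\theta_x,\theta_y,\theta_z,\theta_{xz-y}\in[0,\pi]$, so that $$\cos(\theta_x+\theta_z)+\cos(\theta_x-\theta_z)-\cos(\theta_y)-\cos(\theta_{xz-y})=0.$$ If two of the four terms $\cos(\theta_x+\theta_z)$, $\cos(\theta_x-\theta_z)$, $-\cos(\theta_y)$, $-\cos(\theta_{xz-y})$ sum to zero, then $k=2$.
   Context: $E$ is the set $\{(x,y,z)\in[-2,2]^3:-2\le x^2+y^2+z^2-xyz-2\le2\}$ (the $\mathrm{SU}(2)$ character variety of the one-holed torus in trace coordinates), and $E_k=\{(x,y,z)\in E:x^2+y^2+z^2-xyz-2=k\}$. The map $(x,y,z)\mapsto(x,z,xz-y)$ preserves $E$, so $xz-y\in[-2,2]$. *)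

theory Defs
  imports Complex_Main
begin

definition kappa :: "real \<Rightarrow> real \<Rightarrow> real \<Rightarrow> real" where
  "kappa x y z = x^2 + y^2 + z^2 - x*y*z - 2"

text \<open>The SU(2) character variety of the one-holed torus in trace coordinates.\<close>
definition E :: "(real \<times> real \<times> real) set" where
  "E = {(x,y,z). x \<in> {-2..2} \<and> y \<in> {-2..2} \<and> z \<in> {-2..2} \<and>
                 -2 \<le> kappa x y z \<and> kappa x y z \<le> 2}"

definition E_k :: "real \<Rightarrow> (real \<times> real \<times> real) set" where
  "E_k k = {(x,y,z). (x,y,z) \<in> E \<and> kappa x y z = k}"

end

theory Submission
  imports Defs
begin

theorem proposition5p1:
  fixes x y z k \<theta>x \<theta>y \<theta>z \<theta>w :: real
  assumes "(x, y, z) \<in> E_k k"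
    and "x \<noteq> 0" and "y \<noteq> 0" and "z \<noteq> 0"
    and "\<theta>x \<in> {0..pi}" and "\<theta>y \<in> {0..pi}" and "\<theta>z \<in> {0..pi}" and "\<theta>w \<in> {0..pi}"
    and "x = 2 * cos \<theta>x" and "y = 2 * cos \<theta>y" and "z = 2 * cos \<theta>z"
    and "x * z - y = 2 * cos \<theta>w"
    and "(let t1 = cos (\<theta>x + \<theta>z); t2 = cos (\<theta>x - \<theta>z);
              t3 = - cos \<theta>y; t4 = - cos \<theta>w
          in t1 + t2 = 0 \<or> t1 + t3 = 0 \<or> t1 + t4 = 0 \<or>
             t2 + t3 = 0 \<or> t2 + t4 = 0 \<or> t3 + t4 = 0)"
  shows "k = 2"
proof -
  define a where "a = cos (\<theta>x + \<theta>z)"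
  define b where "b = cos (\<theta>x - \<theta>z)"
  define c where "c = cos \<theta>y"
  define d where "d = cos \<theta>w"
  have k: "k = kappa x y z" using assms(1) by (simp add: E_k_def)
  have sx: "sin \<theta>x ^ 2 = 1 - cos \<theta>x ^ 2" and sz: "sin \<theta>z ^ 2 = 1 - cos \<theta>z ^ 2"
    by (simp_all add: sin_squared_eq)
  have ab: "a + b = x * z / 2" unfolding a_def b_def
    using assms(9,11) by (simp add: cos_add cos_diff)
  have ab2: "a * b = cos \<theta>x ^ 2 + cos \<theta>z ^ 2 - 1" unfolding a_def b_def
  proof -
    have "cos (\<theta>x + \<theta>z) * cos (\<theta>x - \<theta>z) = (cos \<theta>x * cos \<theta>z)^2 - (sin \<theta>x * sin \<theta>z)^2"
      by (simp add: cos_add cos_diff power2_eq_square algebra_simps)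
    also have "\<dots> = cos \<theta>x ^ 2 + cos \<theta>z ^ 2 - 1"
      by (simp add: power_mult_distrib sx sz algebra_simps)
    finally show "cos (\<theta>x + \<theta>z) * cos (\<theta>x - \<theta>z) = cos \<theta>x ^ 2 + cos \<theta>z ^ 2 - 1" .
  qed
  have cy: "y = 2 * c" using assms(10) c_def by simp
  have dd: "d = a + b - c" using assms(12) ab cy d_def by simp
  have kid: "k - 2 = 4 * (c - a) * (c - b)"
  proof -
    have "(c - a) * (c - b) = c^2 - c * (a + b) + a * b" by (simp add: algebra_simps power2_eq_square)
    then show ?thesis using k ab ab2 cy assms(9,11)
      by (simp add: kappa_def algebra_simps power2_eq_square)
  qed
  have xz: "x * z \<noteq> 0" using assms(2,4) by simp
  have "a = c \<or> b = c"
    using assms(13) ab dd xz unfolding Let_def a_def[symmetric] b_def[symmetric]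
      c_def[symmetric] d_def[symmetric] by auto
  then show ?thesis using kid by auto
qed

end
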